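(* Let $s_1(t)$, $s_2(t)$ be arbitrary functions with $s_1(0)=0$, and let $\alpha(\xi,t)$, $\rho(\xi,t)$, $\delta(\eta,t)$, $\theta(\eta,t)$ be smooth functions satisfying \[ \alpha_t=i\alpha_{\xi\xi}-i\alpha_\xi^2,\qquad \delta_t=i\delta_{\eta\eta}+i\delta_\eta^2+s_1(t), \] \[ \rho_t=-i\rho_{\xi\xi}-2i\alpha_\xi\rho_\xi+s_1(t)\rho+s_2(t),\qquad \theta_t=-i\theta_{\eta\eta}+2i\delta_\eta\theta_\eta+s_1(t)\theta-s_2(t). \] Then this system is linearized by the Cole--Hopf type substitutions \[ \alpha=-\ln\beta_1,\qquad \delta=\ln\beta_2+\int_0^t s_1(\tau)\,d\tau,\qquad \rho_\xi=\beta_1\beta_3\,e^{\int_0^t s_1(\tau)\,d\tau},\qquad \theta_\eta=e^{\delta}\beta_4, \] i.e. the functions $\beta_1(\xi,t)$, $\beta_2(\eta,t)$, $\beta_3(\xi,t)$, $\beta_4(\eta,t)$ so defined satisfy the heat equations with imaginary time \[ \beta_{1,t}=i\beta_{1,\xi\xi},\qquad \beta_{2,t}=i\beta_{2,\eta\eta},\qquad \beta_{3,t}=-i\beta_{3,\xi\xi},\qquad \beta_{4,t}=-i\beta_{4,\eta\eta}. \]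
   Context: Subscripts denote partial derivatives; all functions are complex-valued and smooth, and logarithms are taken locally (branches chosen so the substitutions make sense). *)

theory Defs
  imports "HOL-Analysis.Analysis"
begin

definition pd1 :: "(real \<Rightarrow> real \<Rightarrow> complex) \<Rightarrow> real \<Rightarrow> real \<Rightarrow> complex" where
  "pd1 f = (\<lambda>x t. vector_derivative (\<lambda>y. f y t) (at x))"

definition pd2 :: "(real \<Rightarrow> real \<Rightarrow> complex) \<Rightarrow> real \<Rightarrow> real \<Rightarrow> complex" where
  "pd2 f = (\<lambda>x t. vector_derivative (\<lambda>s. f x s) (at t))"

fun iterpd :: "bool list \<Rightarrow> (real \<Rightarrow> real \<Rightarrow> complex) \<Rightarrow> real \<Rightarrow> real \<Rightarrow> complex" where
  "iterpd [] f = f"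
| "iterpd (b # ws) f = (if b then pd1 else pd2) (iterpd ws f)"

definition smooth2 :: "(real \<times> real) set \<Rightarrow> (real \<Rightarrow> real \<Rightarrow> complex) \<Rightarrow> bool" where
  "smooth2 U f \<longleftrightarrow> (\<forall>ws. (\<lambda>p. iterpd ws f (fst p) (snd p)) differentiable_on U)"

definition integral0 :: "(real \<Rightarrow> complex) \<Rightarrow> real \<Rightarrow> complex" where
  "integral0 s t = (if 0 \<le> t then integral {0..t} s else - integral {t..0} s)"

end

theory Submission
  imports Defs
begin


lemma iterpd_app: "iterpd ws (iterpd vs f) = iterpd (ws @ vs) f"
  by (induction ws) auto

lemma sm_pd1: "smooth2 U f \<Longrightarrow> smooth2 U (pd1 f)"
  unfolding smooth2_def
proof
  fix ws assume "\<forall>ws. (\<lambda>p. iterpd ws f (fst p) (snd p)) differentiable_on U"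
  then have "(\<lambda>p. iterpd (ws @ [True]) f (fst p) (snd p)) differentiable_on U" by blast
  then show "(\<lambda>p. iterpd ws (pd1 f) (fst p) (snd p)) differentiable_on U"
    using iterpd_app[of ws "[True]" f] by simp
qed

lemma sm_pd2: "smooth2 U f \<Longrightarrow> smooth2 U (pd2 f)"
  unfolding smooth2_def
proof
  fix ws assume "\<forall>ws. (\<lambda>p. iterpd ws f (fst p) (snd p)) differentiable_on U"
  then have "(\<lambda>p. iterpd (ws @ [False]) f (fst p) (snd p)) differentiable_on U" by blast
  then show "(\<lambda>p. iterpd ws (pd2 f) (fst p) (snd p)) differentiable_on U"
    using iterpd_app[of ws "[False]" f] by simp
qed

lemma sm_diff: "smooth2 U f \<Longrightarrow> (\<lambda>p. f (fst p) (snd p)) differentiable_on U"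
  unfolding smooth2_def by (metis iterpd.simps(1))

lemma sm_cont: "smooth2 U f \<Longrightarrow> continuous_on U (\<lambda>p. f (fst p) (snd p))"
  using sm_diff differentiable_imp_continuous_on by blast

lemma sm_d1:
  assumes "smooth2 U f" "open U" "(x, t) \<in> U"
  shows "((\<lambda>y. f y t) has_vector_derivative pd1 f x t) (at x)"
proof -
  have "(\<lambda>p. f (fst p) (snd p)) differentiable at (x, t)"
    using sm_diff[OF assms(1)] assms(2,3) differentiable_on_eq_differentiable_at by blast
  moreover have "(\<lambda>y::real. (y, t)) differentiable at x"
    by (intro derivative_intros)
  ultimately have "((\<lambda>p. f (fst p) (snd p)) \<circ> (\<lambda>y. (y, t))) differentiable at x"
    by (intro differentiable_chain_at) auto
  then have "(\<lambda>y. f y t) differentiable at x" by (simp add: o_def)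
  then show ?thesis unfolding pd1_def using vector_derivative_works by blast
qed

lemma sm_d2:
  assumes "smooth2 U f" "open U" "(x, t) \<in> U"
  shows "((\<lambda>s. f x s) has_vector_derivative pd2 f x t) (at t)"
proof -
  have "(\<lambda>p. f (fst p) (snd p)) differentiable at (x, t)"
    using sm_diff[OF assms(1)] assms(2,3) differentiable_on_eq_differentiable_at by blast
  moreover have "(\<lambda>s::real. (x, s)) differentiable at t"
    by (intro derivative_intros)
  ultimately have "((\<lambda>p. f (fst p) (snd p)) \<circ> (\<lambda>s. (x, s))) differentiable at t"
    by (intro differentiable_chain_at) auto
  then have "(\<lambda>s. f x s) differentiable at t" by (simp add: o_def)
  then show ?thesis unfolding pd2_def using vector_derivative_works by blast
qed

lemma open_slice1: "open (U::(real*real) set) \<Longrightarrow> open {y. (y, t) \<in> U}"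
proof -
  assume "open U"
  have "continuous_on UNIV (\<lambda>y::real. (y, t))" by (intro continuous_intros)
  then have "open ((\<lambda>y::real. (y, t)) -` U)"
    using \<open>open U\<close> open_vimage by blast
  then show ?thesis by (simp add: vimage_def)
qed

lemma open_slice2: "open (U::(real*real) set) \<Longrightarrow> open {s. (x, s) \<in> U}"
proof -
  assume "open U"
  have "continuous_on UNIV (\<lambda>s::real. (x, s))" by (intro continuous_intros)
  then have "open ((\<lambda>s::real. (x, s)) -` U)"
    using \<open>open U\<close> open_vimage by blast
  then show ?thesis by (simp add: vimage_def)
qed

lemma T1:
  assumes "open U" "(x, t) \<in> U" "\<forall>(y, s)\<in>U. g y s = G y s"
    and "((\<lambda>y. G y t) has_vector_derivative D) (at x)"
  shows "pd1 g x t = D"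
proof -
  have "((\<lambda>y. g y t) has_vector_derivative D) (at x)"
    by (rule has_vector_derivative_transform_within_open[OF assms(4) open_slice1[OF assms(1)]])
       (use assms in auto)
  then show ?thesis unfolding pd1_def by (rule vector_derivative_at)
qed

lemma T2:
  assumes "open U" "(x, t) \<in> U" "\<forall>(y, s)\<in>U. g y s = G y s"
    and "((\<lambda>s. G x s) has_vector_derivative D) (at t)"
  shows "pd2 g x t = D"
proof -
  have "((\<lambda>s. g x s) has_vector_derivative D) (at t)"
    by (rule has_vector_derivative_transform_within_open[OF assms(4) open_slice2[OF assms(1)]])
       (use assms in auto)
  then show ?thesis unfolding pd2_def by (rule vector_derivative_at)
qed



lemma schwarz:
  assumes sm: "smooth2 U f" and U: "open U" and p0: "(x0, t0) \<in> U"
  shows "pd2 (pd1 f) x0 t0 = pd1 (pd2 f) x0 t0"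
proof -
  define g where "g = pd1 f"
  define h where "h = pd2 g"
  have smg: "smooth2 U g" using sm_pd1[OF sm] g_def by simp
  have smh: "smooth2 U h" using sm_pd2[OF smg] h_def by simp
  obtain r where r: "r > 0" "ball (x0, t0) r \<subseteq> U" using U p0 open_contains_ball by blast
  define e where "e = r / 3"
  have e: "e > 0" using r e_def by simp
  define a where "a = x0 - e"
  define b where "b = x0 + e"
  have ab: "a < x0" "x0 < b" using e a_def b_def by auto
  have R: "(y, s) \<in> U" if "y \<in> {a..b}" "s \<in> ball t0 e" for y s
  proof -
    have "dist (x0, t0) (y, s) \<le> dist x0 y + dist t0 s"
      unfolding dist_Pair_Pair by (rule sqrt_sum_squares_le_sum_abs[THEN order_trans]) simp
    also have "\<dots> < r" using that e_def a_def b_def by (auto simp: dist_real_def)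
    finally show ?thesis using r by auto
  qed
  have abx: "a \<le> x" if "x \<in> {a..b}" for x using that by auto
  have S1: "f x s - f a s = integral {a..x} (\<lambda>y. g y s)" if x: "x \<in> {a..b}" and s: "s \<in> ball t0 e" for x s
  proof -
    have "((\<lambda>y. g y s) has_integral (f x s - f a s)) {a..x}"
    proof (rule fundamental_theorem_of_calculus[where f="\<lambda>y. f y s", OF abx[OF x]])
      fix y assume "y \<in> {a..x}"
      then have "(y, s) \<in> U" using R x s by auto
      then show "((\<lambda>y. f y s) has_vector_derivative g y s) (at y within {a..x})"
        using sm_d1[OF sm U] g_def has_vector_derivative_at_within by blast
    qed
    then show ?thesis by (simp add: integral_unique)
  qed
  have S2: "pd2 f x t0 - pd2 f a t0 = integral {a..x} (\<lambda>y. h y t0)" if x: "x \<in> {a..b}" for x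
  proof -
    have t0b: "t0 \<in> ball t0 e" using e by simp
    have L: "((\<lambda>s. integral (cbox a x) (\<lambda>y. g y s)) has_vector_derivative integral (cbox a x) (\<lambda>y. h y t0))
      (at t0 within ball t0 e)"
    proof (rule leibniz_rule_vector_derivative[where f="\<lambda>s y. g y s" and fx="\<lambda>s y. h y s"])
      fix s y assume "s \<in> ball t0 e" "y \<in> cbox a x"
      then have "(y, s) \<in> U" using R x by auto
      then show "((\<lambda>s. g y s) has_vector_derivative h y s) (at s within ball t0 e)"
        using sm_d2[OF smg U] h_def has_vector_derivative_at_within by blast
    next
      fix s assume s: "s \<in> ball t0 e"
      have "continuous_on (cbox a x) ((\<lambda>p. g (fst p) (snd p)) \<circ> (\<lambda>y. (y, s)))"
        by (rule continuous_on_compose[OF _ continuous_on_subset[OF sm_cont[OF smg]]])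
           (use R x s in \<open>auto intro!: continuous_intros\<close>)
      then have "continuous_on {a..x} (\<lambda>y. g y s)" by (simp add: o_def)
      then show "(\<lambda>y. g y s) integrable_on cbox a x"
        by (metis integrable_continuous_interval cbox_interval)
    next
      have cc: "continuous_on (ball t0 e \<times> cbox a x) (\<lambda>z. (snd z, fst z))"
        by (intro continuous_intros)
      have ss: "(\<lambda>z. (snd z, fst z)) ` (ball t0 e \<times> cbox a x) \<subseteq> U"
        using R x by auto
      have "continuous_on (ball t0 e \<times> cbox a x) (\<lambda>z. h (fst (snd z, fst z)) (snd (snd z, fst z)))"
        by (rule continuous_on_compose2[OF sm_cont[OF smh] cc ss])
      then show "continuous_on (ball t0 e \<times> cbox a x) (\<lambda>(s, y). h y s)"
        by (simp add: case_prod_unfold)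
    qed (use t0b in auto)
    then have L': "((\<lambda>s. integral {a..x} (\<lambda>y. g y s)) has_vector_derivative integral {a..x} (\<lambda>y. h y t0)) (at t0)"
      using at_within_open[OF t0b open_ball] by simp
    have aU: "(a, t0) \<in> U" and xU: "(x, t0) \<in> U" using R x ab e by auto
    have "((\<lambda>s. f x s - f a s) has_vector_derivative pd2 f x t0 - pd2 f a t0) (at t0)"
      by (rule has_vector_derivative_diff[OF sm_d2[OF sm U xU] sm_d2[OF sm U aU]])
    then have "((\<lambda>s. integral {a..x} (\<lambda>y. g y s)) has_vector_derivative pd2 f x t0 - pd2 f a t0) (at t0)"
      by (rule has_vector_derivative_transform_within_open[OF _ open_ball t0b]) (use S1 x in auto)
    then show ?thesis using L' vector_derivative_unique_at by blast
  qed
  have x0ab: "x0 \<in> {a<..<b}" using ab by auto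
  have ch: "continuous_on {a..b} (\<lambda>y. h y t0)"
  proof -
    have "continuous_on {a..b} ((\<lambda>p. h (fst p) (snd p)) \<circ> (\<lambda>y. (y, t0)))"
      by (rule continuous_on_compose[OF _ continuous_on_subset[OF sm_cont[OF smh]]])
         (use R e in \<open>auto intro!: continuous_intros\<close>)
    then show ?thesis by (simp add: o_def)
  qed
  have "((\<lambda>u. integral {a..u} (\<lambda>y. h y t0)) has_vector_derivative h x0 t0) (at x0 within {a..b})"
    by (rule integral_has_vector_derivative[OF ch]) (use ab in auto)
  then have "((\<lambda>u. integral {a..u} (\<lambda>y. h y t0)) has_vector_derivative h x0 t0) (at x0 within {a<..<b})"
    by (rule has_vector_derivative_within_subset) auto
  then have "((\<lambda>u. integral {a..u} (\<lambda>y. h y t0)) has_vector_derivative h x0 t0) (at x0)"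
    using at_within_open[OF x0ab open_greaterThanLessThan] by simp
  then have "((\<lambda>u. pd2 f a t0 + integral {a..u} (\<lambda>y. h y t0)) has_vector_derivative h x0 t0) (at x0)"
    using has_vector_derivative_add[OF has_vector_derivative_const[of "pd2 f a t0"]] by (metis add_0_left)
  then have "((\<lambda>u. pd2 f u t0) has_vector_derivative h x0 t0) (at x0)"
    by (rule has_vector_derivative_transform_within_open[OF _ open_greaterThanLessThan x0ab])
       (metis S2 greaterThanLessThan_iff atLeastAtMost_iff less_imp_le add_diff_cancel_left' diff_add_cancel)
  moreover have "((\<lambda>u. pd2 f u t0) has_vector_derivative pd1 (pd2 f) x0 t0) (at x0)"
    using sm_d1[OF sm_pd2[OF sm] U p0] .
  ultimately show ?thesis unfolding h_def g_def using vector_derivative_unique_at by metis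
qed



lemma integral0_deriv:
  assumes c: "continuous_on UNIV s"
  shows "((\<lambda>t. integral0 s t) has_vector_derivative s t0) (at t0)"
proof -
  define a where "a = - \<bar>t0\<bar> - 1"
  define b where "b = \<bar>t0\<bar> + 1"
  have t0ab: "t0 \<in> {a<..<b}" using a_def b_def by auto
  have int: "s integrable_on {p..q}" for p q
    by (rule integrable_continuous_interval) (rule continuous_on_subset[OF c], simp)
  have eq: "integral {a..u} s - integral {a..0} s = integral0 s u" if u: "u \<in> {a<..<b}" for u
  proof (cases "0 \<le> u")
    case True
    have "integral {a..0} s + integral {0..u} s = integral {a..u} s"
      using Henstock_Kurzweil_Integration.integral_combine[where a=a and c=0 and b=u and f=s, OF _ True int] a_def by linarith
    then show ?thesis using True unfolding integral0_def by (simp add: algebra_simps)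
  next
    case False
    have "integral {a..u} s + integral {u..0} s = integral {a..0} s"
      using Henstock_Kurzweil_Integration.integral_combine[where a=a and c=u and b=0 and f=s, OF _ _ int] False u by auto
    then show ?thesis using False unfolding integral0_def by (simp add: algebra_simps)
  qed
  have "((\<lambda>u. integral {a..u} s) has_vector_derivative s t0) (at t0 within {a..b})"
    by (rule integral_has_vector_derivative) (use t0ab continuous_on_subset[OF c] in auto)
  then have "((\<lambda>u. integral {a..u} s) has_vector_derivative s t0) (at t0 within {a<..<b})"
    by (rule has_vector_derivative_within_subset) auto
  then have "((\<lambda>u. integral {a..u} s) has_vector_derivative s t0) (at t0)"
    using at_within_open[OF t0ab open_greaterThanLessThan] by metis
  then have "((\<lambda>u. integral {a..u} s - integral {a..0} s) has_vector_derivative s t0 - 0) (at t0)"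
    by (rule has_vector_derivative_diff[OF _ has_vector_derivative_const])
  then have "((\<lambda>u. integral {a..u} s - integral {a..0} s) has_vector_derivative s t0) (at t0)"
    by (metis diff_zero)
  then show ?thesis
    by (rule has_vector_derivative_transform_within_open[OF _ open_greaterThanLessThan t0ab]) (use eq in auto)
qed



lemma vd_exp:
  fixes g :: "real \<Rightarrow> complex"
  assumes "(g has_vector_derivative g') (at x)"
  shows "((\<lambda>y. exp (g y)) has_vector_derivative g' * exp (g x)) (at x)"
  using field_vector_diff_chain_at[OF assms DERIV_exp] by (simp add: o_def)

lemma vd_eq: "(f has_vector_derivative D) F \<Longrightarrow> D = E \<Longrightarrow> (f has_vector_derivative E) F"
  by simp

lemma T1e:
  assumes "open U" "(x, t) \<in> U" "\<And>y s. (y, s) \<in> U \<Longrightarrow> g y s = G y s"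
    and "((\<lambda>y. G y t) has_vector_derivative D) (at x)" "D = E"
  shows "pd1 g x t = E"
  using T1[of U x t g G D] assms by auto

lemma T2e:
  assumes "open U" "(x, t) \<in> U" "\<And>y s. (y, s) \<in> U \<Longrightarrow> g y s = G y s"
    and "((\<lambda>s. G x s) has_vector_derivative D) (at t)" "D = E"
  shows "pd2 g x t = E"
  using T2[of U x t g G D] assms by auto



lemma part1:
  fixes \<alpha> \<beta>1 :: "real \<Rightarrow> real \<Rightarrow> complex"
  assumes U: "open U" and sa: "smooth2 U \<alpha>"
    and aeq: "\<And>x t. (x, t) \<in> U \<Longrightarrow> pd2 \<alpha> x t = \<i> * pd1 (pd1 \<alpha>) x t - \<i> * (pd1 \<alpha> x t)\<^sup>2"
    and b1: "\<And>x t. (x, t) \<in> U \<Longrightarrow> \<beta>1 x t = exp (- \<alpha> x t)"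
    and p: "(x, t) \<in> U"
  shows "pd2 \<beta>1 x t = \<i> * pd1 (pd1 \<beta>1) x t"
proof -
  have sa1: "smooth2 U (pd1 \<alpha>)" by (rule sm_pd1[OF sa])
  have F1: "pd1 \<beta>1 y s = - pd1 \<alpha> y s * exp (- \<alpha> y s)" if q: "(y, s) \<in> U" for y s
    by (rule T1e[where g=\<beta>1 and G="\<lambda>y s. exp (- \<alpha> y s)", OF U q b1, OF _ vd_exp[OF has_vector_derivative_minus[OF sm_d1[OF sa U q]]]]) auto
  have F2: "pd1 (pd1 \<beta>1) x t = (- pd1 (pd1 \<alpha>) x t + (pd1 \<alpha> x t)\<^sup>2) * exp (- \<alpha> x t)"
    by (rule T1e[where g="pd1 \<beta>1" and G="\<lambda>y s. - pd1 \<alpha> y s * exp (- \<alpha> y s)", OF U p F1, OF _ has_vector_derivative_mult[OF has_vector_derivative_minus[OF sm_d1[OF sa1 U p]]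
         vd_exp[OF has_vector_derivative_minus[OF sm_d1[OF sa U p]]]]])
       (auto simp: algebra_simps power2_eq_square)
  have F3: "pd2 \<beta>1 x t = - pd2 \<alpha> x t * exp (- \<alpha> x t)"
    by (rule T2e[where g=\<beta>1 and G="\<lambda>y s. exp (- \<alpha> y s)", OF U p b1, OF _ vd_exp[OF has_vector_derivative_minus[OF sm_d2[OF sa U p]]]]) auto
  show ?thesis unfolding F2 F3 aeq[OF p] by (simp add: algebra_simps)
qed



lemma part2:
  fixes \<delta> \<beta>2 :: "real \<Rightarrow> real \<Rightarrow> complex" and s1 :: "real \<Rightarrow> complex"
  assumes V: "open V" and sd: "smooth2 V \<delta>" and c: "continuous_on UNIV s1"
    and deq: "\<And>y t. (y, t) \<in> V \<Longrightarrow> pd2 \<delta> y t = \<i> * pd1 (pd1 \<delta>) y t + \<i> * (pd1 \<delta> y t)\<^sup>2 + s1 t"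
    and b2: "\<And>y t. (y, t) \<in> V \<Longrightarrow> \<beta>2 y t = exp (\<delta> y t - integral0 s1 t)"
    and p: "(x, t) \<in> V"
  shows "pd2 \<beta>2 x t = \<i> * pd1 (pd1 \<beta>2) x t"
proof -
  have sd1: "smooth2 V (pd1 \<delta>)" by (rule sm_pd1[OF sd])
  have F1: "pd1 \<beta>2 y s = pd1 \<delta> y s * exp (\<delta> y s - integral0 s1 s)" if q: "(y, s) \<in> V" for y s
    by (rule T1e[where g=\<beta>2 and G="\<lambda>y s. exp (\<delta> y s - integral0 s1 s)", OF V q b2,
          OF _ vd_exp[OF has_vector_derivative_diff[OF sm_d1[OF sd V q] has_vector_derivative_const]]]) auto
  have F2: "pd1 (pd1 \<beta>2) x t = (pd1 (pd1 \<delta>) x t + (pd1 \<delta> x t)\<^sup>2) * exp (\<delta> x t - integral0 s1 t)"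
    by (rule T1e[where g="pd1 \<beta>2" and G="\<lambda>y s. pd1 \<delta> y s * exp (\<delta> y s - integral0 s1 s)", OF V p F1,
          OF _ has_vector_derivative_mult[OF sm_d1[OF sd1 V p]
         vd_exp[OF has_vector_derivative_diff[OF sm_d1[OF sd V p] has_vector_derivative_const]]]])
       (auto simp: algebra_simps power2_eq_square)
  have F3: "pd2 \<beta>2 x t = (pd2 \<delta> x t - s1 t) * exp (\<delta> x t - integral0 s1 t)"
    by (rule T2e[where g=\<beta>2 and G="\<lambda>y s. exp (\<delta> y s - integral0 s1 s)", OF V p b2,
          OF _ vd_exp[OF has_vector_derivative_diff[OF sm_d2[OF sd V p] integral0_deriv[OF c]]]]) auto
  show ?thesis unfolding F2 F3 deq[OF p] by (simp add: algebra_simps)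
qed



lemma part3:
  fixes \<alpha> \<rho> \<beta>3 :: "real \<Rightarrow> real \<Rightarrow> complex" and s1 s2 :: "real \<Rightarrow> complex"
  assumes U: "open U" and sa: "smooth2 U \<alpha>" and sr: "smooth2 U \<rho>" and c: "continuous_on UNIV s1"
    and aeq: "\<And>x t. (x, t) \<in> U \<Longrightarrow> pd2 \<alpha> x t = \<i> * pd1 (pd1 \<alpha>) x t - \<i> * (pd1 \<alpha> x t)\<^sup>2"
    and req: "\<And>x t. (x, t) \<in> U \<Longrightarrow> pd2 \<rho> x t = - \<i> * pd1 (pd1 \<rho>) x t - 2 * \<i> * pd1 \<alpha> x t * pd1 \<rho> x t
                                 + s1 t * \<rho> x t + s2 t"
    and b3: "\<And>x t. (x, t) \<in> U \<Longrightarrow> \<beta>3 x t = pd1 \<rho> x t * exp (\<alpha> x t - integral0 s1 t)"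
    and p: "(x, t) \<in> U"
  shows "pd2 \<beta>3 x t = - \<i> * pd1 (pd1 \<beta>3) x t"
proof -
  define r where "r = pd1 \<rho>"
  have sa1: "smooth2 U (pd1 \<alpha>)" by (rule sm_pd1[OF sa])
  have sr1: "smooth2 U r" unfolding r_def by (rule sm_pd1[OF sr])
  have sr11: "smooth2 U (pd1 r)" by (rule sm_pd1[OF sr1])
  have b3': "\<And>x t. (x, t) \<in> U \<Longrightarrow> \<beta>3 x t = r x t * exp (\<alpha> x t - integral0 s1 t)"
    using b3 r_def by simp
  have F1: "pd1 \<beta>3 y s = (pd1 r y s + r y s * pd1 \<alpha> y s) * exp (\<alpha> y s - integral0 s1 s)" if q: "(y, s) \<in> U" for y s
    by (rule T1e[where g=\<beta>3 and G="\<lambda>y s. r y s * exp (\<alpha> y s - integral0 s1 s)", OF U q b3',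
          OF _ has_vector_derivative_mult[OF sm_d1[OF sr1 U q]
           vd_exp[OF has_vector_derivative_diff[OF sm_d1[OF sa U q] has_vector_derivative_const]]]])
       (auto simp: algebra_simps)
  have F2: "pd1 (pd1 \<beta>3) x t = ((pd1 r x t + r x t * pd1 \<alpha> x t) * pd1 \<alpha> x t
       + (pd1 (pd1 r) x t + (r x t * pd1 (pd1 \<alpha>) x t + pd1 r x t * pd1 \<alpha> x t))) * exp (\<alpha> x t - integral0 s1 t)"
    by (rule T1e[where g="pd1 \<beta>3" and G="\<lambda>y s. (pd1 r y s + r y s * pd1 \<alpha> y s) * exp (\<alpha> y s - integral0 s1 s)", OF U p F1,
          OF _ has_vector_derivative_mult[OF has_vector_derivative_add[OF sm_d1[OF sr11 U p]
             has_vector_derivative_mult[OF sm_d1[OF sr1 U p] sm_d1[OF sa1 U p]]]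
           vd_exp[OF has_vector_derivative_diff[OF sm_d1[OF sa U p] has_vector_derivative_const]]]])
       (auto simp: algebra_simps)
  have F3: "pd2 \<beta>3 x t = (pd2 r x t + r x t * (pd2 \<alpha> x t - s1 t)) * exp (\<alpha> x t - integral0 s1 t)"
    by (rule T2e[where g=\<beta>3 and G="\<lambda>y s. r y s * exp (\<alpha> y s - integral0 s1 s)", OF U p b3',
          OF _ has_vector_derivative_mult[OF sm_d2[OF sr1 U p]
           vd_exp[OF has_vector_derivative_diff[OF sm_d2[OF sa U p] integral0_deriv[OF c]]]]])
       (auto simp: algebra_simps)
  have Sw: "pd2 r x t = pd1 (pd2 \<rho>) x t" unfolding r_def by (rule schwarz[OF sr U p])
  have req': "\<And>x t. (x, t) \<in> U \<Longrightarrow> pd2 \<rho> x t = - \<i> * pd1 r x t - 2 * \<i> * pd1 \<alpha> x t * r x t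
                                 + s1 t * \<rho> x t + s2 t" using req r_def by simp
  have F4: "pd1 (pd2 \<rho>) x t = - \<i> * pd1 (pd1 r) x t
      - 2 * \<i> * (pd1 (pd1 \<alpha>) x t * r x t + pd1 \<alpha> x t * pd1 r x t) + s1 t * r x t"
    by (rule T1e[where g="pd2 \<rho>" and G="\<lambda>y s. - \<i> * pd1 r y s - 2 * \<i> * pd1 \<alpha> y s * r y s
                                 + s1 s * \<rho> y s + s2 s", OF U p req',
          OF _ has_vector_derivative_add[OF has_vector_derivative_add[OF has_vector_derivative_diff[OF
             has_vector_derivative_mult_right[OF sm_d1[OF sr11 U p]]
             has_vector_derivative_mult[OF has_vector_derivative_mult_right[OF sm_d1[OF sa1 U p]] sm_d1[OF sr1 U p]]]
             has_vector_derivative_mult_right[OF sm_d1[OF sr U p]]] has_vector_derivative_const]])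
       (auto simp: algebra_simps r_def)
  show ?thesis unfolding F2 F3 Sw F4 aeq[OF p] by (simp add: algebra_simps power2_eq_square)
qed



lemma part4:
  fixes \<delta> \<theta> \<beta>4 :: "real \<Rightarrow> real \<Rightarrow> complex" and s1 s2 :: "real \<Rightarrow> complex"
  assumes V: "open V" and sd: "smooth2 V \<delta>" and st: "smooth2 V \<theta>"
    and deq: "\<And>y t. (y, t) \<in> V \<Longrightarrow> pd2 \<delta> y t = \<i> * pd1 (pd1 \<delta>) y t + \<i> * (pd1 \<delta> y t)\<^sup>2 + s1 t"
    and teq: "\<And>y t. (y, t) \<in> V \<Longrightarrow> pd2 \<theta> y t = - \<i> * pd1 (pd1 \<theta>) y t + 2 * \<i> * pd1 \<delta> y t * pd1 \<theta> y t
                                 + s1 t * \<theta> y t - s2 t"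
    and b4: "\<And>y t. (y, t) \<in> V \<Longrightarrow> \<beta>4 y t = pd1 \<theta> y t * exp (- \<delta> y t)"
    and p: "(x, t) \<in> V"
  shows "pd2 \<beta>4 x t = - \<i> * pd1 (pd1 \<beta>4) x t"
proof -
  define q where "q = pd1 \<theta>"
  have sd1: "smooth2 V (pd1 \<delta>)" by (rule sm_pd1[OF sd])
  have sq1: "smooth2 V q" unfolding q_def by (rule sm_pd1[OF st])
  have sq11: "smooth2 V (pd1 q)" by (rule sm_pd1[OF sq1])
  have b4': "\<And>x t. (x, t) \<in> V \<Longrightarrow> \<beta>4 x t = q x t * exp (- \<delta> x t)"
    using b4 q_def by simp
  have F1: "pd1 \<beta>4 y s = (pd1 q y s - q y s * pd1 \<delta> y s) * exp (- \<delta> y s)" if r: "(y, s) \<in> V" for y s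
    by (rule T1e[where g=\<beta>4 and G="\<lambda>y s. q y s * exp (- \<delta> y s)", OF V r b4',
          OF _ has_vector_derivative_mult[OF sm_d1[OF sq1 V r]
           vd_exp[OF has_vector_derivative_minus[OF sm_d1[OF sd V r]]]]])
       (auto simp: algebra_simps)
  have F2: "pd1 (pd1 \<beta>4) x t = ((pd1 q x t - q x t * pd1 \<delta> x t) * (- pd1 \<delta> x t)
       + (pd1 (pd1 q) x t - (q x t * pd1 (pd1 \<delta>) x t + pd1 q x t * pd1 \<delta> x t))) * exp (- \<delta> x t)"
    by (rule T1e[where g="pd1 \<beta>4" and G="\<lambda>y s. (pd1 q y s - q y s * pd1 \<delta> y s) * exp (- \<delta> y s)", OF V p F1,
          OF _ has_vector_derivative_mult[OF has_vector_derivative_diff[OF sm_d1[OF sq11 V p]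
             has_vector_derivative_mult[OF sm_d1[OF sq1 V p] sm_d1[OF sd1 V p]]]
           vd_exp[OF has_vector_derivative_minus[OF sm_d1[OF sd V p]]]]])
       (auto simp: algebra_simps)
  have F3: "pd2 \<beta>4 x t = (pd2 q x t - q x t * pd2 \<delta> x t) * exp (- \<delta> x t)"
    by (rule T2e[where g=\<beta>4 and G="\<lambda>y s. q y s * exp (- \<delta> y s)", OF V p b4',
          OF _ has_vector_derivative_mult[OF sm_d2[OF sq1 V p]
           vd_exp[OF has_vector_derivative_minus[OF sm_d2[OF sd V p]]]]])
       (auto simp: algebra_simps)
  have Sw: "pd2 q x t = pd1 (pd2 \<theta>) x t" unfolding q_def by (rule schwarz[OF st V p])
  have teq': "\<And>y t. (y, t) \<in> V \<Longrightarrow> pd2 \<theta> y t = - \<i> * pd1 q y t + 2 * \<i> * pd1 \<delta> y t * q y t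
                                 + s1 t * \<theta> y t - s2 t" using teq q_def by simp
  have F4: "pd1 (pd2 \<theta>) x t = - \<i> * pd1 (pd1 q) x t
      + 2 * \<i> * (pd1 (pd1 \<delta>) x t * q x t + pd1 \<delta> x t * pd1 q x t) + s1 t * q x t"
    by (rule T1e[where g="pd2 \<theta>" and G="\<lambda>y s. - \<i> * pd1 q y s + 2 * \<i> * pd1 \<delta> y s * q y s
                                 + s1 s * \<theta> y s - s2 s", OF V p teq',
          OF _ has_vector_derivative_diff[OF has_vector_derivative_add[OF has_vector_derivative_add[OF
             has_vector_derivative_mult_right[OF sm_d1[OF sq11 V p]]
             has_vector_derivative_mult[OF has_vector_derivative_mult_right[OF sm_d1[OF sd1 V p]] sm_d1[OF sq1 V p]]]
             has_vector_derivative_mult_right[OF sm_d1[OF st V p]]] has_vector_derivative_const]])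
       (auto simp: algebra_simps q_def)
  show ?thesis unfolding F2 F3 Sw F4 deq[OF p] by (simp add: algebra_simps power2_eq_square)
qed


theorem theorem5p1:
  fixes s1 s2 :: "real \<Rightarrow> complex"
    and \<alpha> \<rho> \<delta> \<theta> \<beta>1 \<beta>2 \<beta>3 \<beta>4 :: "real \<Rightarrow> real \<Rightarrow> complex"
    and U V :: "(real \<times> real) set"
  assumes "open U" and "open V"
    and "continuous_on UNIV s1" and "s1 0 = 0"
    and "smooth2 U \<alpha>" and "smooth2 U \<rho>" and "smooth2 V \<delta>" and "smooth2 V \<theta>"
    and "\<forall>(x, t)\<in>U. pd2 \<alpha> x t = \<i> * pd1 (pd1 \<alpha>) x t - \<i> * (pd1 \<alpha> x t)\<^sup>2"
    and "\<forall>(y, t)\<in>V. pd2 \<delta> y t = \<i> * pd1 (pd1 \<delta>) y t + \<i> * (pd1 \<delta> y t)\<^sup>2 + s1 t"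
    and "\<forall>(x, t)\<in>U. pd2 \<rho> x t = - \<i> * pd1 (pd1 \<rho>) x t - 2 * \<i> * pd1 \<alpha> x t * pd1 \<rho> x t
                                 + s1 t * \<rho> x t + s2 t"
    and "\<forall>(y, t)\<in>V. pd2 \<theta> y t = - \<i> * pd1 (pd1 \<theta>) y t + 2 * \<i> * pd1 \<delta> y t * pd1 \<theta> y t
                                 + s1 t * \<theta> y t - s2 t"
    and "\<forall>(x, t)\<in>U. exp (- \<alpha> x t) = \<beta>1 x t"
    and "\<forall>(y, t)\<in>V. exp (\<delta> y t - integral0 s1 t) = \<beta>2 y t"
    and "\<forall>(x, t)\<in>U. pd1 \<rho> x t = \<beta>1 x t * \<beta>3 x t * exp (integral0 s1 t)"
    and "\<forall>(y, t)\<in>V. pd1 \<theta> y t = exp (\<delta> y t) * \<beta>4 y t"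
  shows "(\<forall>(x, t)\<in>U. pd2 \<beta>1 x t = \<i> * pd1 (pd1 \<beta>1) x t
                   \<and> pd2 \<beta>3 x t = - \<i> * pd1 (pd1 \<beta>3) x t)
       \<and> (\<forall>(y, t)\<in>V. pd2 \<beta>2 y t = \<i> * pd1 (pd1 \<beta>2) y t
                   \<and> pd2 \<beta>4 y t = - \<i> * pd1 (pd1 \<beta>4) y t)"
proof -
  note a = assms
  have aeq: "\<And>x t. (x, t) \<in> U \<Longrightarrow> pd2 \<alpha> x t = \<i> * pd1 (pd1 \<alpha>) x t - \<i> * (pd1 \<alpha> x t)\<^sup>2"
    using a(9) by auto
  have deq: "\<And>y t. (y, t) \<in> V \<Longrightarrow> pd2 \<delta> y t = \<i> * pd1 (pd1 \<delta>) y t + \<i> * (pd1 \<delta> y t)\<^sup>2 + s1 t"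
    using a(10) by auto
  have req: "\<And>x t. (x, t) \<in> U \<Longrightarrow> pd2 \<rho> x t = - \<i> * pd1 (pd1 \<rho>) x t - 2 * \<i> * pd1 \<alpha> x t * pd1 \<rho> x t
                                 + s1 t * \<rho> x t + s2 t"
    using a(11) by auto
  have teq: "\<And>y t. (y, t) \<in> V \<Longrightarrow> pd2 \<theta> y t = - \<i> * pd1 (pd1 \<theta>) y t + 2 * \<i> * pd1 \<delta> y t * pd1 \<theta> y t
                                 + s1 t * \<theta> y t - s2 t"
    using a(12) by auto
  have b1: "\<And>x t. (x, t) \<in> U \<Longrightarrow> \<beta>1 x t = exp (- \<alpha> x t)"
    using a(13) by auto
  have b2: "\<And>y t. (y, t) \<in> V \<Longrightarrow> \<beta>2 y t = exp (\<delta> y t - integral0 s1 t)"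
    using a(14) by auto
  have b3: "\<beta>3 x t = pd1 \<rho> x t * exp (\<alpha> x t - integral0 s1 t)" if q: "(x, t) \<in> U" for x t
  proof -
    have e: "exp (- \<alpha> x t) * exp (integral0 s1 t) * exp (\<alpha> x t - integral0 s1 t) = 1"
      by (simp add: mult_exp_exp)
    have "pd1 \<rho> x t = exp (- \<alpha> x t) * \<beta>3 x t * exp (integral0 s1 t)"
      using a(15) b1[OF q] q by auto
    then have "pd1 \<rho> x t * exp (\<alpha> x t - integral0 s1 t)
        = \<beta>3 x t * (exp (- \<alpha> x t) * exp (integral0 s1 t) * exp (\<alpha> x t - integral0 s1 t))"
      by (simp add: algebra_simps)
    then show ?thesis using e by simp
  qed
  have b4: "\<beta>4 y t = pd1 \<theta> y t * exp (- \<delta> y t)" if q: "(y, t) \<in> V" for y t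
  proof -
    have e: "exp (\<delta> y t) * exp (- \<delta> y t) = 1"
      by (simp add: mult_exp_exp)
    have "pd1 \<theta> y t = exp (\<delta> y t) * \<beta>4 y t"
      using a(16) q by auto
    then have "pd1 \<theta> y t * exp (- \<delta> y t) = \<beta>4 y t * (exp (\<delta> y t) * exp (- \<delta> y t))"
      by (simp add: algebra_simps)
    then show ?thesis using e by simp
  qed
  have G1: "pd2 \<beta>1 x t = \<i> * pd1 (pd1 \<beta>1) x t \<and> pd2 \<beta>3 x t = - \<i> * pd1 (pd1 \<beta>3) x t"
    if p: "(x, t) \<in> U" for x t
    using part1[OF a(1) a(5) aeq b1 p] part3[OF a(1) a(5) a(6) a(3) aeq req b3 p] by blast
  have G2: "pd2 \<beta>2 y t = \<i> * pd1 (pd1 \<beta>2) y t \<and> pd2 \<beta>4 y t = - \<i> * pd1 (pd1 \<beta>4) y t"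
    if p: "(y, t) \<in> V" for y t
    using part2[OF a(2) a(7) a(3) deq b2 p] part4[OF a(2) a(7) a(8) deq teq b4 p] by blast
  show ?thesis using G1 G2 by blast
qed

end
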